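(* Let $m\in\mathbb R$ satisfy $D^-M(m)\le0\le D^+M(m)$, assume the boundedness condition (B) holds, and let $(a_n)_{n\in\mathbb N}$ be a positive sequence with $a_n\to\infty$ such that $\sqrt n\,D^+M(m+x/a_n)\to\delta(x)\in[-\infty,\infty]$ for every $x\in\mathbb R$. Use the conventions $\exp(-\infty)=0$. (1) If the right limits $\alpha_+:=a(0+)$ and $\beta_+:=b(0+)$ exist in $\mathbb R$ with $\beta_+>\alpha_+$, then $\limsup_{n\to\infty}\mathbb P\big(a_n\sup_{k\ge n}(\hat m_k-m)>x\big)\le\exp\{-2(\beta_+-\alpha_+)^{-2}\delta(x)^2\}$ for all $x>0$. (2) If the left limits $\alpha_-:=a(0-)$ and $\beta_-:=b(0-)$ exist in $\mathbb R$ with $\beta_->\alpha_-$, then $\limsup_{n\to\infty}\mathbb P\big(a_n\inf_{k\ge n}(\hat m_k-m)<x\big)\le\exp\{-2(\beta_--\alpha_-)^{-2}\delta(x)^2\}$ for all $x<0$. (3) If both one-sided limits exist as in (1) and (2), then $\limsup_{n\to\infty}\mathbb P\big(a_n\sup_{k\ge n}|\hat m_k-m|>x\big)\le 2\exp\{-2\tau^{-2}\Delta(x)^2\}$ for all $x>0$, where $\tau:=\max\{\beta_+-\alpha_+,\beta_--\alpha_-\}$ and $\Delta(x):=\min\{\delta(x),-\delta(-x)\}$.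
   Context: Let $(S,\mathcal S,Q)$ be a probability space and $h:S\times\mathbb R\to\mathbb R$ such that $h(\cdot,t)$ is $\mathcal S$-measurable for every $t\in\mathbb R$ and $h(x,\cdot)$ is convex for every $x\in S$. For $f:\mathbb R\to\mathbb R$ convex, $D^+f$ and $D^-f$ denote its right and left derivatives; $D^\pm h(x,t)$ denotes the one-sided derivatives of $h(x,\cdot)$ at $t$. Assume $\int_S|D^+h(x,t)|\,Q(dx)<\infty$ and $\int_S|D^-h(x,t)|\,Q(dx)<\infty$ for all $t\in\mathbb R$. Fix $t_0\in\mathbb R$ and set $M(t):=\int_S (h(x,t)-h(x,t_0))\,Q(dx)$; $M$ is real-valued and convex with $D^\pm M(t)=\int_S D^\pm h(x,t)\,Q(dx)$. Let $X_1,X_2,\dots$ be i.i.d. $S$-valued random variables on a probability space $(\Omega,\mathcal A,\mathbb P)$ with common law $Q$, let $M_n(t):=\frac1n\sum_{i=1}^n (h(X_i,t)-h(X_i,t_0))$, and let $\hat m_n$ be the smallest minimizing point of $M_n$ (assumed to exist; it is a random variable). Boundedness condition (B): for every $x\neq 0$ there are reals $a(x)<b(x)$ with $a(x)\le D^+h(X_1,m+x)\le b(x)$ almost surely. *)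

theory Defs
  imports "HOL-Probability.Probability"
begin

definition Dplus :: "(real \<Rightarrow> real) \<Rightarrow> real \<Rightarrow> real" where
  "Dplus f t = Lim (at_right 0) (\<lambda>s. (f (t + s) - f t) / s)"

definition Dminus :: "(real \<Rightarrow> real) \<Rightarrow> real \<Rightarrow> real" where
  "Dminus f t = Lim (at_left 0) (\<lambda>s. (f (t + s) - f t) / s)"

definition popM :: "'s measure \<Rightarrow> ('s \<Rightarrow> real \<Rightarrow> real) \<Rightarrow> real \<Rightarrow> real \<Rightarrow> real" where
  "popM Q h t0 t = (\<integral>x. (h x t - h x t0) \<partial>Q)"

definition empM :: "('s \<Rightarrow> real \<Rightarrow> real) \<Rightarrow> real \<Rightarrow> (nat \<Rightarrow> 'w \<Rightarrow> 's) \<Rightarrow> nat \<Rightarrow> 'w \<Rightarrow> real \<Rightarrow> real" where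
  "empM h t0 X n \<omega> t = (1 / real n) * (\<Sum>i<n. (h (X i \<omega>) t - h (X i \<omega>) t0))"

fun eexp :: "ereal \<Rightarrow> ereal" where
  "eexp (ereal r) = ereal (exp r)"
| "eexp PInfty = PInfty"
| "eexp MInfty = 0"

end

theory Submission
  imports Defs
begin


lemma slope_mono_right:
  fixes f :: "real \<Rightarrow> real"
  assumes f: "convex_on UNIV f" and a: "0 < a" "a \<le> b"
  shows "(f (t+a) - f t)/a \<le> (f (t+b) - f t)/b"
proof (cases "a = b")
  case False
  with a have ab: "a < b" by simp
  have "(f t - f (t+a)) / (t - (t+a)) \<le> (f t - f (t+b)) / (t - (t+b))"
    using convex_on_slope_le(1)[OF f, of t "t+b" "t+a"] a ab by simp
  moreover have "(f t - f (t+a)) / (t - (t+a)) = (f (t+a) - f t)/a" using a by (simp add: field_simps)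
  moreover have "(f t - f (t+b)) / (t - (t+b)) = (f (t+b) - f t)/b" using a ab by (simp add: field_simps)
  ultimately show ?thesis by simp
qed simp

lemma slope_left_le_right:
  fixes f :: "real \<Rightarrow> real"
  assumes f: "convex_on UNIV f" and "u < t" "0 < a"
  shows "(f t - f u)/(t - u) \<le> (f (t+a) - f t)/a"
proof -
  have 1: "(f u - f t) / (u - t) \<le> (f u - f (t+a)) / (u - (t+a))"
    using convex_on_slope_le(1)[OF f, of u "t+a" t] assms by simp
  have 2: "(f u - f (t+a)) / (u - (t+a)) \<le> (f t - f (t+a)) / (t - (t+a))"
    using convex_on_slope_le(2)[OF f, of u "t+a" t] assms by simp
  have "(f u - f t) / (u - t) = (f t - f u)/(t - u)" by (metis minus_diff_eq minus_divide_divide)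
  moreover have "(f t - f (t+a)) / (t - (t+a)) = (f (t+a) - f t)/a" using assms by (simp add: field_simps)
  ultimately show ?thesis using 1 2 by linarith
qed

lemma Dplus_tendsto:
  fixes f :: "real \<Rightarrow> real"
  assumes f: "convex_on UNIV f"
  shows "((\<lambda>s. (f (t+s) - f t)/s) \<longlongrightarrow> Dplus f t) (at_right 0)"
proof -
  let ?R = "\<lambda>s. (f (t+s) - f t)/s"
  have "(?R \<longlongrightarrow> Inf (?R ` ({0<..} \<inter> UNIV))) (at 0 within ({0<..} \<inter> UNIV))"
  proof (rule Lim_right_bound[where K="(f t - f (t-1))/(t - (t-1))"])
    fix a b :: real assume "0 < a" "a \<le> b" then show "?R a \<le> ?R b"
      using slope_mono_right[OF f] by blast
  next
    fix a :: real assume "0 < a" then show "(f t - f (t-1))/(t - (t-1)) \<le> ?R a"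
      using slope_left_le_right[OF f, of "t-1" t a] by simp
  qed
  then have L: "(?R \<longlongrightarrow> Inf (?R ` ({0<..} \<inter> UNIV))) (at_right 0)" by simp
  then have "Dplus f t = Inf (?R ` ({0<..} \<inter> UNIV))"
    unfolding Dplus_def by (intro tendsto_Lim) auto
  with L show ?thesis by simp
qed

lemma Dplus_le_slope:
  fixes f :: "real \<Rightarrow> real"
  assumes f: "convex_on UNIV f" and "0 < a"
  shows "Dplus f t \<le> (f (t+a) - f t)/a"
proof (rule tendsto_le[OF _ tendsto_const Dplus_tendsto[OF f]])
  show "\<forall>\<^sub>F x in at_right 0. (f (t + x) - f t) / x \<le> (f (t + a) - f t) / a"
    using eventually_at_right_real[OF \<open>0 < a\<close>]
    by eventually_elim (use slope_mono_right[OF f] in auto)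
qed simp

lemma slope_le_Dplus:
  fixes f :: "real \<Rightarrow> real"
  assumes f: "convex_on UNIV f" and "u < t"
  shows "(f t - f u)/(t - u) \<le> Dplus f t"
proof (rule tendsto_le[OF _ Dplus_tendsto[OF f] tendsto_const])
  show "\<forall>\<^sub>F x in at_right 0. (f t - f u)/(t - u) \<le> (f (t + x) - f t) / x"
    using eventually_at_right_real[OF zero_less_one]
    by eventually_elim (use slope_left_le_right[OF f \<open>u<t\<close>] in auto)
qed simp

lemma Dplus_subgrad:
  fixes f :: "real \<Rightarrow> real"
  assumes f: "convex_on UNIV f"
  shows "f t + Dplus f t * (u - t) \<le> f u"
proof (cases u t rule: linorder_cases)
  case less
  have "(f t - f u)/(t - u) \<le> Dplus f t" using slope_le_Dplus[OF f less] .
  then have "f t - f u \<le> Dplus f t * (t - u)" using less by (simp add: field_simps)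
  then show ?thesis by (simp add: algebra_simps)
next
  case greater
  have "Dplus f t \<le> (f (t+(u-t)) - f t)/(u-t)" by (rule Dplus_le_slope[OF f]) (use greater in simp)
  then have "Dplus f t * (u-t) \<le> f u - f t" using greater by (simp add: field_simps)
  then show ?thesis by simp
qed simp

lemma Dplus_mono:
  fixes f :: "real \<Rightarrow> real"
  assumes f: "convex_on UNIV f" and "s \<le> t"
  shows "Dplus f s \<le> Dplus f t"
proof (cases "s = t")
  case False
  with assms have st: "s < t" by simp
  have 1: "f s + Dplus f s * (t - s) \<le> f t" by (rule Dplus_subgrad[OF f])
  have 2: "f t + Dplus f t * (s - t) \<le> f s" by (rule Dplus_subgrad[OF f])
  from 1 2 have "Dplus f s * (t - s) \<le> Dplus f t * (t - s)" by (simp add: algebra_simps)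
  with st show ?thesis by simp
qed simp

lemma Dplus_le_Dminus:
  fixes f :: "real \<Rightarrow> real"
  assumes f: "convex_on UNIV f" and ut: "u < t"
  shows "Dplus f u \<le> Dminus f t"
proof -
  let ?L = "\<lambda>s. (f (t+s) - f t)/s"
  have "(?L \<longlongrightarrow> Sup (?L ` ({..<0} \<inter> UNIV))) (at 0 within ({..<0} \<inter> UNIV))"
  proof (rule Lim_left_bound[where K="Dplus f t"])
    fix a b :: real assume ab: "b < 0" "a \<le> b"
    show "?L a \<le> ?L b"
    proof (cases "a = b")
      case False
      then have "a < b" using ab by simp
      have "(f (t+a) - f (t+b)) / ((t+a) - (t+b)) \<le> (f (t+a) - f t) / ((t+a) - t)"
        using convex_on_slope_le(1)[OF f, of "t+a" t "t+b"] ab \<open>a<b\<close> by simp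
      also have "\<dots> \<le> (f (t+b) - f t) / ((t+b) - t)"
        using convex_on_slope_le(2)[OF f, of "t+a" t "t+b"] ab \<open>a<b\<close> by simp
      finally show ?thesis
        using convex_on_slope_le(2)[OF f, of "t+a" t "t+b"] ab \<open>a<b\<close> by simp
    qed simp
  next
    fix b :: real assume b: "b < 0"
    have "f t + Dplus f t * ((t+b) - t) \<le> f (t+b)" by (rule Dplus_subgrad[OF f])
    then have "Dplus f t * b \<le> f (t+b) - f t" by simp
    then show "?L b \<le> Dplus f t" using b by (simp add: field_simps)
  qed
  then have L: "(?L \<longlongrightarrow> Sup (?L ` ({..<0} \<inter> UNIV))) (at_left 0)" by simp
  then have "Dminus f t = Sup (?L ` ({..<0} \<inter> UNIV))"
    unfolding Dminus_def by (intro tendsto_Lim) auto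
  with L have L': "(?L \<longlongrightarrow> Dminus f t) (at_left 0)" by simp
  show ?thesis
  proof (rule tendsto_le[OF _ L' tendsto_const])
    have ev: "eventually (\<lambda>x. x \<in> {u-t<..<0}) (at_left (0::real))"
      by (rule eventually_at_left_real) (use ut in simp)
    show "\<forall>\<^sub>F s in at_left 0. Dplus f u \<le> ?L s"
      using ev
    proof (eventually_elim)
      case (elim s)
      then have s: "u < t + s" "s < 0" by auto
      have "Dplus f u \<le> Dplus f (t+s)" using Dplus_mono[OF f] s by simp
      also have "f (t+s) + Dplus f (t+s) * (t - (t+s)) \<le> f t" by (rule Dplus_subgrad[OF f])
      then have "Dplus f (t+s) \<le> ?L s" using s by (simp add: field_simps)
      finally show ?case .
    qed
  qed simp
qed




fun ustop :: "real \<Rightarrow> ('s \<Rightarrow> real) \<Rightarrow> nat \<Rightarrow> (nat \<Rightarrow> 's) \<Rightarrow> real" where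
  "ustop C e 0 f = 1"
| "ustop C e (Suc j) f = (if C \<le> ustop C e j f then ustop C e j f else ustop C e j f * e (f j))"

lemma ustop_nonneg: "(\<And>z. 0 \<le> e z) \<Longrightarrow> 0 \<le> ustop C e j f"
  by (induction j) auto

lemma ustop_cong: "(\<And>i. i < j \<Longrightarrow> f i = g i) \<Longrightarrow> ustop C e j f = ustop C e j g"
  by (induction j) auto

lemma ustop_meas:
  assumes e: "e \<in> borel_measurable Q"
  shows "{..<j} \<subseteq> J \<Longrightarrow> (\<lambda>f. ustop C e j f) \<in> borel_measurable (PiM J (\<lambda>_. Q))"
proof (induction j)
  case 0 then show ?case by simp
next
  case (Suc j)
  have "{..<j} \<subseteq> J" using Suc.prems by auto
  then have IH[measurable]: "(\<lambda>f. ustop C e j f) \<in> borel_measurable (PiM J (\<lambda>_. Q))" using Suc.IH by auto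
  have jJ: "j \<in> J" using Suc.prems by auto
  have [measurable]: "(\<lambda>f. e (f j)) \<in> borel_measurable (PiM J (\<lambda>_. Q))"
    using measurable_comp[OF measurable_component_singleton[OF jJ] e] by (simp add: comp_def)
  show ?case by simp measurable
qed

lemma ustop_inv: "C \<le> ustop C e j f \<or> ustop C e j f = (\<Prod>i<j. e (f i))"
  by (induction j) auto

lemma ustop_stay: "C \<le> ustop C e j f \<Longrightarrow> j \<le> N \<Longrightarrow> C \<le> ustop C e N f"
proof (induction N)
  case 0 then show ?case by simp
next
  case (Suc N)
  show ?case
  proof (cases "j = Suc N")
    case False
    with Suc have "C \<le> ustop C e N f" by auto
    then show ?thesis by simp
  qed (use Suc in simp)
qed

lemma (in prob_space) indep_var_nn_integral2:
  fixes X1 X2 :: "'a \<Rightarrow> ennreal"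
  assumes "indep_var borel X1 borel X2"
  shows "(\<integral>\<^sup>+\<omega>. X1 \<omega> * X2 \<omega> \<partial>M) = (\<integral>\<^sup>+\<omega>. X1 \<omega> \<partial>M) * (\<integral>\<^sup>+\<omega>. X2 \<omega> \<partial>M)"
proof -
  have *: "(\<lambda>\<omega>. X1 \<omega> * X2 \<omega>) = (\<lambda>\<omega>. \<Prod>i\<in>UNIV. (case_bool X1 X2 i \<omega>))"
    by (simp add: UNIV_bool mult.commute)
  have **: "(\<lambda> _. borel) = case_bool borel borel"
    by (rule ext, metis (full_types) bool.simps(3) bool.simps(4))
  show ?thesis
    apply (subst *)
    apply (subst indep_vars_nn_integral)
    using assms unfolding indep_var_def ** by (auto simp: UNIV_bool mult.commute)
qed

lemma core_hoeff:
  fixes P :: "'w measure" and Q :: "'s measure" and Y :: "'w \<Rightarrow> 's" and g :: "'s \<Rightarrow> real"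
  assumes Q: "prob_space Q" and Ym: "Y \<in> measurable P Q" and Yd: "distr P Q Y = Q"
   and g[measurable]: "g \<in> borel_measurable Q" and gAE: "AE x in Q. \<alpha> \<le> g x \<and> g x \<le> \<beta>"
   and l: "0 < l"
  shows "(\<integral>\<^sup>+\<omega>. ennreal (exp (l * (integral\<^sup>L Q g - g (Y \<omega>)) - l^2 * (\<beta> - \<alpha>)^2 / 8)) \<partial>P) \<le> 1"
proof -
  interpret Q: prob_space Q by fact
  interpret H: interval_bounded_random_variable Q "\<lambda>x. - g x" "-\<beta>" "-\<alpha>"
    by unfold_locales (auto intro!: eventually_mono[OF gAE])
  have "(\<integral>\<^sup>+x. ennreal (exp (l * (- g x - Q.expectation (\<lambda>x. - g x)))) \<partial>Q) \<le> ennreal (exp (l\<^sup>2 * (- \<alpha> - - \<beta>)\<^sup>2 / 8))"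
    by (rule H.Hoeffdings_lemma_nn_integral[OF l])
  then have H1: "(\<integral>\<^sup>+x. ennreal (exp (l * (integral\<^sup>L Q g - g x))) \<partial>Q) \<le> ennreal (exp (l\<^sup>2 * (\<beta> - \<alpha>)\<^sup>2 / 8))"
    by (simp add: algebra_simps)
  have "(\<integral>\<^sup>+\<omega>. ennreal (exp (l * (integral\<^sup>L Q g - g (Y \<omega>)) - l^2 * (\<beta> - \<alpha>)^2 / 8)) \<partial>P)
      = (\<integral>\<^sup>+x. ennreal (exp (l * (integral\<^sup>L Q g - g x) - l^2 * (\<beta> - \<alpha>)^2 / 8)) \<partial>(distr P Q Y))"
    by (subst nn_integral_distr[OF Ym]) auto
  also have "\<dots> = (\<integral>\<^sup>+x. ennreal (exp (- (l^2 * (\<beta> - \<alpha>)^2 / 8))) * ennreal (exp (l * (integral\<^sup>L Q g - g x))) \<partial>Q)"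
    unfolding Yd
  proof (intro nn_integral_cong)
    fix x
    have "exp (l * (integral\<^sup>L Q g - g x) - l^2 * (\<beta> - \<alpha>)^2 / 8) = exp (- (l^2 * (\<beta> - \<alpha>)^2 / 8)) * exp (l * (integral\<^sup>L Q g - g x))"
      by (simp flip: exp_add)
    then show "ennreal (exp (l * (integral\<^sup>L Q g - g x) - l^2 * (\<beta> - \<alpha>)^2 / 8)) = ennreal (exp (- (l^2 * (\<beta> - \<alpha>)^2 / 8))) * ennreal (exp (l * (integral\<^sup>L Q g - g x)))"
      by (simp add: ennreal_mult)
  qed
  also have "\<dots> = ennreal (exp (- (l^2 * (\<beta> - \<alpha>)^2 / 8))) * (\<integral>\<^sup>+x. ennreal (exp (l * (integral\<^sup>L Q g - g x))) \<partial>Q)"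
    by (rule nn_integral_cmult) simp
  also have "\<dots> \<le> ennreal (exp (- (l^2 * (\<beta> - \<alpha>)^2 / 8))) * ennreal (exp (l\<^sup>2 * (\<beta> - \<alpha>)\<^sup>2 / 8))"
    by (intro mult_left_mono H1) auto
  also have "\<dots> = 1" by (simp flip: ennreal_mult add: exp_minus)
  finally show ?thesis .
qed

lemma core_ustop_int:
  fixes P :: "'w measure" and Q :: "'s measure" and X :: "nat \<Rightarrow> 'w \<Rightarrow> 's" and e :: "'s \<Rightarrow> real"
  assumes P: "prob_space P" and X_meas: "\<And>i. X i \<in> measurable P Q"
    and X_indep: "prob_space.indep_vars P (\<lambda>_. Q) X UNIV"
    and e[measurable]: "e \<in> borel_measurable Q" and e_nn: "\<And>z. 0 \<le> e z"
    and e_int: "\<And>j. (\<integral>\<^sup>+\<omega>. ennreal (e (X j \<omega>)) \<partial>P) \<le> 1"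
  shows "(\<integral>\<^sup>+\<omega>. ennreal (ustop C e N (\<lambda>i. X i \<omega>)) \<partial>P) \<le> 1"
proof (induction N)
  case 0
  then show ?case using P by (simp add: prob_space.emeasure_space_1)
next
  case (Suc N)
  interpret P: prob_space P by fact
  have vecm: "(\<lambda>\<omega>. restrict (\<lambda>i. X i \<omega>) UNIV) \<in> measurable P (PiM UNIV (\<lambda>_. Q))"
    by (rule measurable_restrict) (rule X_meas)
  have Vm[measurable]: "(\<lambda>\<omega>. ustop C e j (\<lambda>i. X i \<omega>)) \<in> borel_measurable P" for j
    using measurable_comp[OF vecm ustop_meas[OF e, of j UNIV C]] by (simp add: comp_def restrict_def)
  have Xm[measurable]: "(\<lambda>\<omega>. e (X j \<omega>)) \<in> borel_measurable P" for j
    using measurable_comp[OF X_meas e] by (simp add: comp_def)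
  define V where "V \<omega> = ustop C e N (\<lambda>i. X i \<omega>)" for \<omega>
  define A where "A \<omega> = ennreal (if C \<le> V \<omega> then V \<omega> else 0)" for \<omega>
  define B where "B \<omega> = ennreal (if C \<le> V \<omega> then 0 else V \<omega>)" for \<omega>
  define E where "E \<omega> = ennreal (e (X N \<omega>))" for \<omega>
  have Vnn: "0 \<le> V \<omega>" for \<omega> unfolding V_def by (rule ustop_nonneg[OF e_nn])
  have [measurable]: "V \<in> borel_measurable P" unfolding V_def by simp
  have [measurable]: "A \<in> borel_measurable P" "B \<in> borel_measurable P" "E \<in> borel_measurable P"
    unfolding A_def B_def E_def by simp_all
  have split: "ennreal (ustop C e (Suc N) (\<lambda>i. X i \<omega>)) = A \<omega> + B \<omega> * E \<omega>" for \<omega>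
    using Vnn[of \<omega>] e_nn[of "X N \<omega>"]
    by (simp add: A_def B_def E_def V_def ennreal_mult)
  have AB: "A \<omega> + B \<omega> = ennreal (V \<omega>)" for \<omega>
    by (simp add: A_def B_def)
  have indep: "P.indep_var borel B borel E"
  proof -
    have 1: "P.indep_var (PiM {..<N} (\<lambda>_. Q)) (\<lambda>\<omega>. restrict (\<lambda>i. X i \<omega>) {..<N})
                (PiM {N} (\<lambda>_. Q)) (\<lambda>\<omega>. restrict (\<lambda>i. X i \<omega>) {N})"
      by (rule P.indep_var_restrict[OF X_indep]) auto
    define \<Phi> where "\<Phi> f = ennreal (if C \<le> ustop C e N f then 0 else ustop C e N f)" for f
    define \<Psi> where "\<Psi> (f :: nat \<Rightarrow> 's) = ennreal (e (f N))" for f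
    have um[measurable]: "(\<lambda>f. ustop C e N f) \<in> borel_measurable (PiM {..<N} (\<lambda>_. Q))"
      by (rule ustop_meas[OF e]) simp
    have \<Phi>m: "\<Phi> \<in> borel_measurable (PiM {..<N} (\<lambda>_. Q))" unfolding \<Phi>_def by simp
    have em: "(\<lambda>f. e (f N)) \<in> borel_measurable (PiM {N} (\<lambda>_. Q))"
      using measurable_comp[OF measurable_component_singleton[of N "{N}" "\<lambda>_. Q"] e]
      by (simp add: comp_def)
    have \<Psi>m: "\<Psi> \<in> borel_measurable (PiM {N} (\<lambda>_. Q))" unfolding \<Psi>_def using em by simp
    have 2: "P.indep_var borel (\<Phi> \<circ> (\<lambda>\<omega>. restrict (\<lambda>i. X i \<omega>) {..<N})) borel (\<Psi> \<circ> (\<lambda>\<omega>. restrict (\<lambda>i. X i \<omega>) {N}))"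
      by (rule P.indep_var_compose[OF 1 \<Phi>m \<Psi>m])
    have 3: "\<Phi> \<circ> (\<lambda>\<omega>. restrict (\<lambda>i. X i \<omega>) {..<N}) = B"
    proof
      fix \<omega>
      have "ustop C e N (restrict (\<lambda>i. X i \<omega>) {..<N}) = V \<omega>"
        unfolding V_def by (rule ustop_cong) simp
      then show "(\<Phi> \<circ> (\<lambda>\<omega>. restrict (\<lambda>i. X i \<omega>) {..<N})) \<omega> = B \<omega>"
        by (simp add: \<Phi>_def B_def)
    qed
    have 4: "\<Psi> \<circ> (\<lambda>\<omega>. restrict (\<lambda>i. X i \<omega>) {N}) = E"
      by (auto simp: \<Psi>_def E_def)
    show ?thesis using 2 unfolding 3 4 .
  qed
  have "(\<integral>\<^sup>+\<omega>. ennreal (ustop C e (Suc N) (\<lambda>i. X i \<omega>)) \<partial>P) = (\<integral>\<^sup>+\<omega>. A \<omega> + B \<omega> * E \<omega> \<partial>P)"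
    by (simp only: split)
  also have "\<dots> = (\<integral>\<^sup>+\<omega>. A \<omega> \<partial>P) + (\<integral>\<^sup>+\<omega>. B \<omega> * E \<omega> \<partial>P)"
    by (rule nn_integral_add) simp_all
  also have "(\<integral>\<^sup>+\<omega>. B \<omega> * E \<omega> \<partial>P) = (\<integral>\<^sup>+\<omega>. B \<omega> \<partial>P) * (\<integral>\<^sup>+\<omega>. E \<omega> \<partial>P)"
    by (rule P.indep_var_nn_integral2[OF indep])
  also have "\<dots> \<le> (\<integral>\<^sup>+\<omega>. B \<omega> \<partial>P) * 1"
    by (intro mult_left_mono) (auto simp: E_def e_int)
  also have "(\<integral>\<^sup>+\<omega>. A \<omega> \<partial>P) + (\<integral>\<^sup>+\<omega>. B \<omega> \<partial>P) * 1 = (\<integral>\<^sup>+\<omega>. A \<omega> + B \<omega> \<partial>P)"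
    by (simp add: nn_integral_add)
  also have "\<dots> = (\<integral>\<^sup>+\<omega>. ennreal (ustop C e N (\<lambda>i. X i \<omega>)) \<partial>P)"
    by (simp add: AB V_def)
  also have "\<dots> \<le> 1" by (rule Suc.IH)
  finally show ?case by (simp add: add_left_mono)
qed

lemma core_max:
  fixes P :: "'w measure" and Q :: "'s measure" and X :: "nat \<Rightarrow> 'w \<Rightarrow> 's" and g :: "'s \<Rightarrow> real"
  assumes P: "prob_space P" and Q: "prob_space Q"
    and X_meas: "\<And>i. X i \<in> measurable P Q" and X_distr: "\<And>i. distr P Q (X i) = Q"
    and X_indep: "prob_space.indep_vars P (\<lambda>_. Q) X UNIV"
    and g[measurable]: "g \<in> borel_measurable Q" and gAE: "AE x in Q. \<alpha> \<le> g x \<and> g x \<le> \<beta>"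
    and \<alpha>\<beta>: "\<alpha> < \<beta>" and \<nu>0: "0 \<le> integral\<^sup>L Q g"
  shows "measure P {\<omega>\<in>space P. \<exists>k\<ge>n. (\<Sum>i<k. g (X i \<omega>)) \<le> 0}
           \<le> exp (-2 * real n * (integral\<^sup>L Q g)^2 / (\<beta> - \<alpha>)^2)"
proof -
  interpret P: prob_space P by fact
  define \<nu> where "\<nu> = integral\<^sup>L Q g"
  define r where "r = \<beta> - \<alpha>"
  have r: "0 < r" using \<alpha>\<beta> by (simp add: r_def)
  have Xm[measurable]: "(\<lambda>\<omega>. g (X j \<omega>)) \<in> borel_measurable P" for j
    using measurable_comp[OF X_meas g] by (simp add: comp_def)
  define S where "S = {\<omega>\<in>space P. \<exists>k\<ge>n. (\<Sum>i<k. g (X i \<omega>)) \<le> 0}"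
  have Ssets: "S \<in> sets P" unfolding S_def by measurable
  show ?thesis
  proof (cases "\<nu> = 0")
    case True
    then show ?thesis using P.prob_le_1 by (simp add: \<nu>_def)
  next
    case False
    with \<nu>0 have \<nu>: "0 < \<nu>" by (simp add: \<nu>_def)
    define l where "l = 4 * \<nu> / r^2"
    define c0 where "c0 = l^2 * r^2 / 8"
    have l: "0 < l" using \<nu> r by (simp add: l_def)
    have c0: "c0 = 2 * \<nu>^2 / r^2" using r by (simp add: c0_def l_def power2_eq_square field_simps)
    have lc: "l * \<nu> - c0 = 2 * \<nu>^2 / r^2" using r by (simp add: c0 l_def power2_eq_square field_simps)
    define e where "e z = exp (l * (\<nu> - g z) - c0)" for z
    define C where "C = exp (real n * (l * \<nu> - c0))"
    have C: "0 < C" by (simp add: C_def)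
    have em[measurable]: "e \<in> borel_measurable Q" unfolding e_def by simp
    have e_int: "(\<integral>\<^sup>+\<omega>. ennreal (e (X j \<omega>)) \<partial>P) \<le> 1" for j
      unfolding e_def c0_def \<nu>_def r_def
      by (rule core_hoeff[OF Q X_meas X_distr g gAE l])
    have U: "(\<integral>\<^sup>+\<omega>. ennreal (ustop C e N (\<lambda>i. X i \<omega>)) \<partial>P) \<le> 1" for N
      by (rule core_ustop_int[OF P X_meas X_indep em _ e_int]) (simp add: e_def)
    have vecm: "(\<lambda>\<omega>. restrict (\<lambda>i. X i \<omega>) UNIV) \<in> measurable P (PiM UNIV (\<lambda>_. Q))"
      by (rule measurable_restrict) (rule X_meas)
    have Vm[measurable]: "(\<lambda>\<omega>. ustop C e j (\<lambda>i. X i \<omega>)) \<in> borel_measurable P" for j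
      using measurable_comp[OF vecm ustop_meas[OF em, of j UNIV C]] by (simp add: comp_def restrict_def)
    define SN where "SN N = {\<omega>\<in>space P. \<exists>k. n \<le> k \<and> k \<le> N \<and> (\<Sum>i<k. g (X i \<omega>)) \<le> 0}" for N
    define T where "T N = {\<omega>\<in>space P. C \<le> ustop C e N (\<lambda>i. X i \<omega>)}" for N
    have Tsets: "T N \<in> sets P" for N unfolding T_def by measurable
    have SNsets: "SN N \<in> sets P" for N unfolding SN_def by measurable
    have ST: "SN N \<subseteq> T N" for N
    proof
      fix \<omega> assume "\<omega> \<in> SN N"
      then obtain k where \<omega>: "\<omega> \<in> space P" and k: "n \<le> k" "k \<le> N" and Sk: "(\<Sum>i<k. g (X i \<omega>)) \<le> 0"
        unfolding SN_def by auto
      have "(\<Prod>i<k. e (X i \<omega>)) = exp (\<Sum>i<k. l * (\<nu> - g (X i \<omega>)) - c0)"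
        unfolding e_def by (simp add: exp_sum)
      also have "(\<Sum>i<k. l * (\<nu> - g (X i \<omega>)) - c0) = real k * (l * \<nu> - c0) - l * (\<Sum>i<k. g (X i \<omega>))"
        by (simp add: sum_subtractf sum_distrib_left sum.distrib algebra_simps)
      finally have W: "(\<Prod>i<k. e (X i \<omega>)) = exp (real k * (l * \<nu> - c0) - l * (\<Sum>i<k. g (X i \<omega>)))" .
      have lc0: "0 \<le> l * \<nu> - c0" unfolding lc using r by simp
      have "real n * (l * \<nu> - c0) \<le> real k * (l * \<nu> - c0)"
        using k lc0 by (intro mult_right_mono) auto
      also have "\<dots> \<le> real k * (l * \<nu> - c0) - l * (\<Sum>i<k. g (X i \<omega>))"
        using l Sk by (simp add: mult_nonneg_nonpos)
      finally have "C \<le> (\<Prod>i<k. e (X i \<omega>))" unfolding W C_def by simp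
      then have "C \<le> ustop C e k (\<lambda>i. X i \<omega>)"
        using ustop_inv[of C e k "\<lambda>i. X i \<omega>"] by auto
      then have "C \<le> ustop C e N (\<lambda>i. X i \<omega>)" using ustop_stay k by blast
      then show "\<omega> \<in> T N" using \<omega> by (simp add: T_def)
    qed
    have Tb: "measure P (T N) \<le> 1 / C" for N
    proof -
      have "ennreal C * emeasure P (T N) = (\<integral>\<^sup>+\<omega>. ennreal C * indicator (T N) \<omega> \<partial>P)"
        by (rule nn_integral_cmult_indicator[symmetric]) (rule Tsets)
      also have "\<dots> \<le> (\<integral>\<^sup>+\<omega>. ennreal (ustop C e N (\<lambda>i. X i \<omega>)) \<partial>P)"
        by (intro nn_integral_mono) (auto simp: T_def indicator_def intro: ennreal_leI)
      also have "\<dots> \<le> 1" by (rule U)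
      finally have "ennreal C * ennreal (measure P (T N)) \<le> 1"
        by (simp add: P.emeasure_eq_measure)
      then have "C * measure P (T N) \<le> 1"
        using C by (simp flip: ennreal_mult add: ennreal_le_1)
      then show ?thesis using C by (simp add: field_simps)
    qed
    have bnd: "1 / C = exp (-2 * real n * \<nu>^2 / r^2)"
      unfolding C_def lc by (simp add: exp_minus field_simps)
    have SNb: "measure P (SN N) \<le> exp (-2 * real n * \<nu>^2 / r^2)" for N
      using P.finite_measure_mono[OF ST Tsets] Tb bnd by (metis order_trans)
    have "S = (\<Union>N. SN N)" unfolding S_def SN_def by auto
    moreover have "incseq SN" unfolding SN_def incseq_def by force
    ultimately have "(\<lambda>N. measure P (SN N)) \<longlonglongrightarrow> measure P S"
      using P.finite_Lim_measure_incseq[of SN] SNsets by auto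
    then have "measure P S \<le> exp (-2 * real n * \<nu>^2 / r^2)"
      by (rule LIMSEQ_le_const2) (use SNb in auto)
    then show ?thesis unfolding S_def \<nu>_def r_def .
  qed
qed




lemma eexp_PInf[simp]: "eexp \<infinity> = \<infinity>" by (metis PInfty_eq_infinity eexp.simps(2))
lemma eexp_MInf[simp]: "eexp (-\<infinity>) = 0" by (metis MInfty_eq_minfinity eexp.simps(3))

lemma eexp_nonneg: "0 \<le> eexp z" by (cases z) auto

lemma eexp_mono: "a \<le> b \<Longrightarrow> eexp a \<le> eexp b"
  by (cases a; cases b) auto

lemma asym:
  fixes p u v :: "nat \<Rightarrow> real" and d d' :: ereal and r c :: real
  assumes pb: "eventually (\<lambda>n. 0 \<le> p n \<and> p n \<le> exp (-2 * (u n)^2 / (v n)^2)) sequentially"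
   and u0: "\<And>n. 0 \<le> u n" and ud: "((\<lambda>n. ereal (u n)) \<longlongrightarrow> d) sequentially"
   and vr: "(v \<longlongrightarrow> r) sequentially" and r: "0 < r"
   and c: "0 < c" "c \<le> 2 / r^2" and d': "0 \<le> d'" "d' \<le> d"
  shows "limsup (\<lambda>n. ereal (p n)) \<le> eexp (- ereal c * d'^2)"
proof -
  define q where "q n = exp (-2 * (u n)^2 / (v n)^2)" for n
  have lq: "limsup (\<lambda>n. ereal (p n)) \<le> limsup (\<lambda>n. ereal (q n))"
    by (rule Limsup_mono) (use pb in \<open>auto elim!: eventually_mono simp: q_def\<close>)
  have d0: "0 \<le> d"
    by (rule LIMSEQ_le_const[OF ud]) (use u0 in auto)
  show ?thesis
  proof (cases d)
    case (real d0)
    then have u: "u \<longlonglongrightarrow> d0" using ud by (simp add: lim_ereal)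
    have "0 \<le> d0" using d0 real by simp
    from d' real obtain d1 where d1: "d' = ereal d1" "0 \<le> d1" "d1 \<le> d0"
      by (cases d') auto
    have "q \<longlonglongrightarrow> exp (-2 * d0^2 / r^2)"
      unfolding q_def using r by (intro tendsto_intros u vr) auto
    then have "(\<lambda>n. ereal (q n)) \<longlonglongrightarrow> ereal (exp (-2 * d0^2 / r^2))"
      by (simp add: lim_ereal)
    then have "limsup (\<lambda>n. ereal (q n)) = ereal (exp (-2 * d0^2 / r^2))"
      by (intro lim_imp_Limsup) auto
    also have "\<dots> \<le> ereal (exp (- (c * d1^2)))"
    proof -
      have "d1^2 \<le> d0^2" using d1 by (intro power_mono) auto
      then have "c * d1^2 \<le> (2 / r^2) * d0^2"
        using c by (intro mult_mono) auto
      then show ?thesis by (simp add: field_simps)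
    qed
    also have "\<dots> = eexp (- ereal c * d'^2)"
      by (simp add: d1 power2_eq_square)
    finally show ?thesis using lq by simp
  next
    case PInf
    then have u: "filterlim u at_top sequentially" using ud by (simp add: tendsto_PInfty_eq_at_top)
    have "filterlim (\<lambda>n. (2 / (v n)^2) * (u n)^2) at_top sequentially"
    proof (rule filterlim_tendsto_pos_mult_at_top)
      show "((\<lambda>n. 2 / (v n)^2) \<longlongrightarrow> 2 / r^2) sequentially"
        using r by (intro tendsto_intros vr) auto
      show "filterlim (\<lambda>n. (u n)^2) at_top sequentially"
        by (rule filterlim_pow_at_top[OF _ u]) auto
    qed (use r in auto)
    then have "filterlim (\<lambda>n. - ((2 / (v n)^2) * (u n)^2)) at_bot sequentially"
      by (simp add: filterlim_uminus_at_top)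
    then have "((\<lambda>n. exp (- ((2 / (v n)^2) * (u n)^2))) \<longlongrightarrow> 0) sequentially"
      by (rule filterlim_compose[OF exp_at_bot])
    then have "q \<longlonglongrightarrow> 0" unfolding q_def by (simp add: field_simps)
    then have "(\<lambda>n. ereal (q n)) \<longlonglongrightarrow> ereal 0" by (simp add: lim_ereal)
    then have "limsup (\<lambda>n. ereal (q n)) = 0"
      by (intro lim_imp_Limsup) (auto simp: zero_ereal_def)
    then show ?thesis using lq eexp_nonneg[of "- ereal c * d'^2"] by simp
  next
    case MInf
    with d0 show ?thesis by simp
  qed
qed




locale setting =
  fixes Q :: "'s measure" and P :: "'w measure"
    and h :: "'s \<Rightarrow> real \<Rightarrow> real" and t0 m :: real
    and X :: "nat \<Rightarrow> 'w \<Rightarrow> 's" and mhat :: "nat \<Rightarrow> 'w \<Rightarrow> real"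
    and a b :: "real \<Rightarrow> real" and an :: "nat \<Rightarrow> real" and \<delta> :: "real \<Rightarrow> ereal"
  assumes Q: "prob_space Q"
    and h_meas: "\<And>t. (\<lambda>x. h x t) \<in> borel_measurable Q"
    and h_convex: "\<And>x. x \<in> space Q \<Longrightarrow> convex_on UNIV (h x)"
    and int_Dplus: "\<And>t. integrable Q (\<lambda>x. Dplus (h x) t)"
    and int_Dminus: "\<And>t. integrable Q (\<lambda>x. Dminus (h x) t)"
    and P: "prob_space P"
    and X_meas: "\<And>i. X i \<in> measurable P Q"
    and X_distr: "\<And>i. distr P Q (X i) = Q"
    and X_indep: "prob_space.indep_vars P (\<lambda>_. Q) X UNIV"
    and mhat_meas: "\<And>n. n \<ge> 1 \<Longrightarrow> mhat n \<in> borel_measurable P"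
    and mhat_min: "\<And>n \<omega> t. n \<ge> 1 \<Longrightarrow> \<omega> \<in> space P \<Longrightarrow>
                      empM h t0 X n \<omega> (mhat n \<omega>) \<le> empM h t0 X n \<omega> t"
    and mhat_smallest: "\<And>n \<omega> t. n \<ge> 1 \<Longrightarrow> \<omega> \<in> space P \<Longrightarrow>
                      empM h t0 X n \<omega> t \<le> empM h t0 X n \<omega> (mhat n \<omega>) \<Longrightarrow> mhat n \<omega> \<le> t"
    and m_crit: "Dminus (popM Q h t0) m \<le> 0" "0 \<le> Dplus (popM Q h t0) m"
    and B: "\<And>x. x \<noteq> 0 \<Longrightarrow> a x < b x \<and>
              (AE \<omega> in P. a x \<le> Dplus (h (X 0 \<omega>)) (m + x) \<and> Dplus (h (X 0 \<omega>)) (m + x) \<le> b x)"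
    and an_pos: "\<And>n. an n > 0"
    and an_lim: "filterlim an at_top sequentially"
    and \<delta>_lim: "\<And>x. ((\<lambda>n. ereal (sqrt (real n) * Dplus (popM Q h t0) (m + x / an n))) \<longlongrightarrow> \<delta> x) sequentially"
begin

interpretation Qp: prob_space Q by (rule Q)
interpretation Pp: prob_space P by (rule P)

lemma Dh_meas[measurable]: "(\<lambda>x. Dplus (h x) t) \<in> borel_measurable Q"
  using int_Dplus by auto

lemma h_meas'[measurable]: "(\<lambda>x. h x t) \<in> borel_measurable Q"
  by (rule h_meas)

lemma X_space: "\<omega> \<in> space P \<Longrightarrow> X i \<omega> \<in> space Q"
  using measurable_space[OF X_meas] .

lemma hdiff_int: "integrable Q (\<lambda>x. h x u - h x v)"
proof (rule Bochner_Integration.integrable_bound)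
  show "integrable Q (\<lambda>x. \<bar>Dplus (h x) v * (u - v)\<bar> + \<bar>Dplus (h x) u * (u - v)\<bar>)"
    using int_Dplus by auto
  show "AE x in Q. norm (h x u - h x v) \<le> norm (\<bar>Dplus (h x) v * (u - v)\<bar> + \<bar>Dplus (h x) u * (u - v)\<bar>)"
  proof (rule AE_I2)
    fix x assume x: "x \<in> space Q"
    have 1: "h x v + Dplus (h x) v * (u - v) \<le> h x u" by (rule Dplus_subgrad[OF h_convex[OF x]])
    have 2: "h x u + Dplus (h x) u * (v - u) \<le> h x v" by (rule Dplus_subgrad[OF h_convex[OF x]])
    have "Dplus (h x) u * (v - u) = - (Dplus (h x) u * (u - v))" by (simp add: algebra_simps)
    with 1 2 show "norm (h x u - h x v) \<le> norm (\<bar>Dplus (h x) v * (u - v)\<bar> + \<bar>Dplus (h x) u * (u - v)\<bar>)"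
      by (simp add: abs_le_iff) linarith
  qed
qed simp

lemma popM_diff: "popM Q h t0 u - popM Q h t0 v = (\<integral>x. h x u - h x v \<partial>Q)"
  unfolding popM_def
  by (subst Bochner_Integration.integral_diff[symmetric]) (auto intro!: hdiff_int Bochner_Integration.integral_cong)

lemma popM_convex: "convex_on UNIV (popM Q h t0)"
proof (rule convex_onI)
  fix t x y :: real assume t: "0 < t" "t < 1"
  have "popM Q h t0 ((1 - t) *\<^sub>R x + t *\<^sub>R y) = (\<integral>z. h z ((1 - t) * x + t * y) - h z t0 \<partial>Q)"
    by (simp add: popM_def)
  also have "\<dots> \<le> (\<integral>z. (1 - t) * (h z x - h z t0) + t * (h z y - h z t0) \<partial>Q)"
  proof (rule integral_mono)
    show "integrable Q (\<lambda>z. h z ((1 - t) * x + t * y) - h z t0)" by (rule hdiff_int)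
    show "integrable Q (\<lambda>z. (1 - t) * (h z x - h z t0) + t * (h z y - h z t0))"
      by (intro Bochner_Integration.integrable_add integrable_mult_right hdiff_int)
    fix z assume z: "z \<in> space Q"
    have "h z ((1 - t) *\<^sub>R x + t *\<^sub>R y) \<le> (1 - t) * h z x + t * h z y"
      using convex_onD[OF h_convex[OF z], of t x y] t by simp
    then show "h z ((1 - t) * x + t * y) - h z t0 \<le> (1 - t) * (h z x - h z t0) + t * (h z y - h z t0)"
      by (simp add: algebra_simps)
  qed
  also have "\<dots> = (1 - t) * popM Q h t0 x + t * popM Q h t0 y"
    unfolding popM_def
    by (subst Bochner_Integration.integral_add) (auto intro!: integrable_mult_right hdiff_int)
  finally show "popM Q h t0 ((1 - t) *\<^sub>R x + t *\<^sub>R y) \<le> (1 - t) * popM Q h t0 x + t * popM Q h t0 y" .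
qed simp

lemma Dplus_popM: "Dplus (popM Q h t0) t = (\<integral>x. Dplus (h x) t \<partial>Q)"
proof -
  let ?q = "\<lambda>s x. (h x (t + s) - h x t) / s"
  have T1: "((\<lambda>s. (popM Q h t0 (t+s) - popM Q h t0 t)/s) \<longlongrightarrow> Dplus (popM Q h t0) t) (at_right 0)"
    by (rule Dplus_tendsto[OF popM_convex])
  have T2: "((\<lambda>s. (popM Q h t0 (t+s) - popM Q h t0 t)/s) \<longlongrightarrow> (\<integral>x. Dplus (h x) t \<partial>Q)) (at_right 0)"
  proof (rule tendsto_at_right_sequentially[of 0 1])
    fix S :: "nat \<Rightarrow> real" assume S: "\<And>n. 0 < S n" "\<And>n. S n < 1" "decseq S" "S \<longlonglongrightarrow> 0"
    have SF: "filterlim S (at_right 0) sequentially"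
      by (rule tendsto_imp_filterlim_at_right[OF S(4)]) (use S(1) in auto)
    have eq: "(popM Q h t0 (t + S n) - popM Q h t0 t) / S n = (\<integral>x. ?q (S n) x \<partial>Q)" for n
      by (simp add: popM_diff)
    have "(\<lambda>n. \<integral>x. ?q (S n) x \<partial>Q) \<longlonglongrightarrow> (\<integral>x. Dplus (h x) t \<partial>Q)"
    proof (rule integral_dominated_convergence[where w="\<lambda>x. \<bar>Dplus (h x) t\<bar> + \<bar>h x (t + 1) - h x t\<bar>"])
      show "(\<lambda>x. Dplus (h x) t) \<in> borel_measurable Q" by simp
      show "(\<lambda>x. ?q (S n) x) \<in> borel_measurable Q" for n by simp
      show "integrable Q (\<lambda>x. \<bar>Dplus (h x) t\<bar> + \<bar>h x (t + 1) - h x t\<bar>)"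
        using int_Dplus hdiff_int by auto
      show "AE x in Q. (\<lambda>n. ?q (S n) x) \<longlonglongrightarrow> Dplus (h x) t"
      proof (rule AE_I2)
        fix x assume x: "x \<in> space Q"
        show "(\<lambda>n. ?q (S n) x) \<longlonglongrightarrow> Dplus (h x) t"
          using filterlim_compose[OF Dplus_tendsto[OF h_convex[OF x], of t] SF] by simp
      qed
      fix n
      show "AE x in Q. norm (?q (S n) x) \<le> \<bar>Dplus (h x) t\<bar> + \<bar>h x (t + 1) - h x t\<bar>"
      proof (rule AE_I2)
        fix x assume x: "x \<in> space Q"
        have 1: "Dplus (h x) t \<le> ?q (S n) x" by (rule Dplus_le_slope[OF h_convex[OF x] S(1)])
        have 2: "?q (S n) x \<le> ?q 1 x"
          by (rule slope_mono_right[OF h_convex[OF x] S(1)]) (use S(2) in \<open>simp add: less_imp_le\<close>)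
        show "norm (?q (S n) x) \<le> \<bar>Dplus (h x) t\<bar> + \<bar>h x (t + 1) - h x t\<bar>"
          using 1 2 by (simp add: abs_le_iff)
      qed
    qed
    then show "(\<lambda>n. (popM Q h t0 (t + S n) - popM Q h t0 t) / S n) \<longlonglongrightarrow> (\<integral>x. Dplus (h x) t \<partial>Q)"
      by (simp only: eq)
  qed simp
  show ?thesis by (rule tendsto_unique[OF _ T1 T2]) simp
qed

lemma empM_diff:
  "empM h t0 X n \<omega> u - empM h t0 X n \<omega> v = (1 / real n) * (\<Sum>i<n. h (X i \<omega>) u - h (X i \<omega>) v)"
proof -
  have e: "(\<Sum>i<n. h (X i \<omega>) u - h (X i \<omega>) t0) - (\<Sum>i<n. h (X i \<omega>) v - h (X i \<omega>) t0)
      = (\<Sum>i<n. h (X i \<omega>) u - h (X i \<omega>) v)"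
    by (subst sum_subtractf[symmetric]) simp
  show ?thesis unfolding empM_def by (simp only: right_diff_distrib[symmetric] e)
qed

lemma claimA:
  assumes n: "n \<ge> 1" and \<omega>: "\<omega> \<in> space P" and t: "t < mhat n \<omega>"
  shows "(\<Sum>i<n. Dplus (h (X i \<omega>)) t) < 0"
proof (rule ccontr)
  assume "\<not> ?thesis"
  then have S: "0 \<le> (\<Sum>i<n. Dplus (h (X i \<omega>)) t)" by simp
  let ?m = "mhat n \<omega>"
  have "(\<Sum>i<n. Dplus (h (X i \<omega>)) t) * (?m - t) \<le> (\<Sum>i<n. h (X i \<omega>) ?m - h (X i \<omega>) t)"
    unfolding sum_distrib_right
  proof (rule sum_mono)
    fix i
    show "Dplus (h (X i \<omega>)) t * (?m - t) \<le> h (X i \<omega>) ?m - h (X i \<omega>) t"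
      using Dplus_subgrad[OF h_convex[OF X_space[OF \<omega>, where i=i]], where t=t and u="mhat n \<omega>"] by simp
  qed
  moreover have "0 \<le> (\<Sum>i<n. Dplus (h (X i \<omega>)) t) * (?m - t)" using S t by simp
  ultimately have "0 \<le> (1 / real n) * (\<Sum>i<n. h (X i \<omega>) ?m - h (X i \<omega>) t)" by simp
  then have "empM h t0 X n \<omega> t \<le> empM h t0 X n \<omega> ?m" using empM_diff[where n=n and \<omega>=\<omega> and u="mhat n \<omega>" and v=t] by simp
  then have "?m \<le> t" by (rule mhat_smallest[OF n \<omega>])
  with t show False by simp
qed

lemma claimB:
  assumes n: "n \<ge> 1" and \<omega>: "\<omega> \<in> space P" and t: "mhat n \<omega> < t"
  shows "0 \<le> (\<Sum>i<n. Dplus (h (X i \<omega>)) t)"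
proof (rule ccontr)
  assume "\<not> ?thesis"
  then have S: "(\<Sum>i<n. Dplus (h (X i \<omega>)) t) < 0" by simp
  let ?m = "mhat n \<omega>"
  have cv: "convex_on UNIV (h (X i \<omega>))" for i by (rule h_convex[OF X_space[OF \<omega>]])
  have "((\<lambda>s. \<Sum>i<n. (h (X i \<omega>) (t + s) - h (X i \<omega>) t) / s) \<longlongrightarrow> (\<Sum>i<n. Dplus (h (X i \<omega>)) t)) (at_right 0)"
    by (intro tendsto_sum Dplus_tendsto[OF cv])
  from order_tendstoD(2)[OF this S]
  have "\<forall>\<^sub>F s in at_right 0. (\<Sum>i<n. (h (X i \<omega>) (t + s) - h (X i \<omega>) t) / s) < 0" .
  moreover have "\<forall>\<^sub>F s in at_right 0. s \<in> {0<..<1::real}"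
    by (rule eventually_at_right_real) simp
  ultimately have "\<forall>\<^sub>F s in at_right 0. (\<Sum>i<n. (h (X i \<omega>) (t + s) - h (X i \<omega>) t) / s) < 0 \<and> s \<in> {0<..<1::real}"
    by (rule eventually_conj)
  then obtain s where s: "(\<Sum>i<n. (h (X i \<omega>) (t + s) - h (X i \<omega>) t) / s) < 0" "0 < s"
    using eventually_happens[of _ "at_right (0::real)"] by auto
  have "(\<Sum>i<n. (h (X i \<omega>) t - h (X i \<omega>) ?m) / (t - ?m)) \<le> (\<Sum>i<n. (h (X i \<omega>) (t + s) - h (X i \<omega>) t) / s)"
    by (intro sum_mono slope_left_le_right[OF cv t s(2)])
  with s have "(\<Sum>i<n. (h (X i \<omega>) t - h (X i \<omega>) ?m) / (t - ?m)) < 0" by simp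
  then have "(\<Sum>i<n. (h (X i \<omega>) t - h (X i \<omega>) ?m)) / (t - ?m) < 0" by (simp add: sum_divide_distrib)
  then have neg: "(\<Sum>i<n. (h (X i \<omega>) t - h (X i \<omega>) ?m)) < 0" using t by (simp add: divide_less_0_iff)
  have "(1 / real n) * (\<Sum>i<n. (h (X i \<omega>) t - h (X i \<omega>) ?m)) < 0"
    using neg n by (simp add: divide_neg_pos)
  then have "empM h t0 X n \<omega> t < empM h t0 X n \<omega> ?m" using empM_diff[where n=n and \<omega>=\<omega> and v="mhat n \<omega>" and u=t] by simp
  with mhat_min[OF n \<omega>, of t] show False by simp
qed

lemma B_Q: "x \<noteq> 0 \<Longrightarrow> AE z in Q. a x \<le> Dplus (h z) (m + x) \<and> Dplus (h z) (m + x) \<le> b x"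
proof -
  assume x: "x \<noteq> 0"
  have "AE \<omega> in P. a x \<le> Dplus (h (X 0 \<omega>)) (m + x) \<and> Dplus (h (X 0 \<omega>)) (m + x) \<le> b x"
    using B[OF x] by blast
  then have "AE z in distr P Q (X 0). a x \<le> Dplus (h z) (m + x) \<and> Dplus (h z) (m + x) \<le> b x"
    by (subst AE_distr_iff[OF X_meas]) simp_all
  then show ?thesis unfolding X_distr .
qed

lemma y_lim: "((\<lambda>n. x / an n) \<longlongrightarrow> 0) sequentially"
proof -
  have "((\<lambda>n. x * inverse (an n)) \<longlongrightarrow> x * 0) sequentially"
    by (intro tendsto_mult tendsto_const tendsto_inverse_0_at_top an_lim)
  then show ?thesis by (simp add: divide_inverse)
qed

lemma delta_nonneg: "0 < x \<Longrightarrow> 0 \<le> \<delta> x"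
proof -
  assume x: "0 < x"
  show ?thesis
  proof (rule LIMSEQ_le_const[OF \<delta>_lim[of x]], intro exI allI impI)
    fix n
    have "0 \<le> Dplus (popM Q h t0) m" by (rule m_crit(2))
    also have "\<dots> \<le> Dplus (popM Q h t0) (m + x / an n)"
      by (rule Dplus_mono[OF popM_convex]) (use x an_pos[of n] in simp)
    finally show "0 \<le> ereal (sqrt (real n) * Dplus (popM Q h t0) (m + x / an n))" by simp
  qed
qed

lemma delta_nonpos: "x < 0 \<Longrightarrow> \<delta> x \<le> 0"
proof -
  assume x: "x < 0"
  show ?thesis
  proof (rule LIMSEQ_le_const2[OF \<delta>_lim[of x]], intro exI allI impI)
    fix n
    have "Dplus (popM Q h t0) (m + x / an n) \<le> Dminus (popM Q h t0) m"
      by (rule Dplus_le_Dminus[OF popM_convex]) (use x an_pos[of n] in \<open>simp add: divide_neg_pos\<close>)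
    also have "\<dots> \<le> 0" by (rule m_crit(1))
    finally show "ereal (sqrt (real n) * Dplus (popM Q h t0) (m + x / an n)) \<le> 0"
      by (simp add: mult_nonneg_nonpos)
  qed
qed

lemma side_plus:
  assumes x: "0 < x" and al: "(a \<longlongrightarrow> \<alpha>p) (at_right 0)" and bl: "(b \<longlongrightarrow> \<beta>p) (at_right 0)"
    and ab: "\<alpha>p < \<beta>p"
    and c: "0 < c" "c \<le> 2 / (\<beta>p - \<alpha>p)^2" and d': "0 \<le> d'" "d' \<le> \<delta> x"
  shows "limsup (\<lambda>n. ereal (measure P {\<omega>\<in>space P. \<exists>k\<ge>n. (\<Sum>i<k. Dplus (h (X i \<omega>)) (m + x / an n)) \<le> 0}))
           \<le> eexp (- ereal c * d'^2)"
proof -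
  define y where "y n = x / an n" for n
  have ypos: "0 < y n" for n using x an_pos[of n] by (simp add: y_def)
  have yF: "filterlim y (at_right 0) sequentially"
  proof -
    have y0: "y \<longlonglongrightarrow> 0" unfolding y_def by (rule y_lim)
    show ?thesis by (rule tendsto_imp_filterlim_at_right[OF y0]) (simp add: ypos)
  qed
  define v where "v n = b (y n) - a (y n)" for n
  have v: "v \<longlonglongrightarrow> \<beta>p - \<alpha>p"
    unfolding v_def by (intro tendsto_diff filterlim_compose[OF bl yF] filterlim_compose[OF al yF])
  define u where "u n = sqrt (real n) * Dplus (popM Q h t0) (m + y n)" for n
  have ud: "(\<lambda>n. ereal (u n)) \<longlonglongrightarrow> \<delta> x" using \<delta>_lim[of x] by (simp add: u_def y_def)
  have Dp: "0 \<le> Dplus (popM Q h t0) (m + y n)" for n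
  proof -
    have "0 \<le> Dplus (popM Q h t0) m" by (rule m_crit(2))
    also have "\<dots> \<le> Dplus (popM Q h t0) (m + y n)"
      by (rule Dplus_mono[OF popM_convex]) (use ypos[of n] in simp)
    finally show ?thesis .
  qed
  have u0: "0 \<le> u n" for n using Dp[of n] by (simp add: u_def)
  define p where "p n = measure P {\<omega>\<in>space P. \<exists>k\<ge>n. (\<Sum>i<k. Dplus (h (X i \<omega>)) (m + x / an n)) \<le> 0}" for n
  have pb: "0 \<le> p n \<and> p n \<le> exp (-2 * (u n)^2 / (v n)^2)" for n
  proof
    show "0 \<le> p n" by (simp add: p_def)
    have yn: "y n \<noteq> 0" using ypos[of n] by simp
    have gAE: "AE z in Q. a (y n) \<le> Dplus (h z) (m + y n) \<and> Dplus (h z) (m + y n) \<le> b (y n)"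
      by (rule B_Q[OF yn])
    have ablt: "a (y n) < b (y n)" using B[OF yn] by blast
    have int: "(\<integral>z. Dplus (h z) (m + y n) \<partial>Q) = Dplus (popM Q h t0) (m + y n)"
      by (rule Dplus_popM[symmetric])
    have "p n \<le> exp (-2 * real n * (\<integral>z. Dplus (h z) (m + y n) \<partial>Q)^2 / (b (y n) - a (y n))^2)"
      unfolding p_def y_def[symmetric]
      by (rule core_max[OF P Q X_meas X_distr X_indep Dh_meas gAE ablt]) (use int Dp in simp)
    also have "\<dots> = exp (-2 * (u n)^2 / (v n)^2)"
      by (simp add: Dplus_popM u_def v_def power_mult_distrib)
    finally show "p n \<le> exp (-2 * (u n)^2 / (v n)^2)" .
  qed
  show ?thesis
    unfolding p_def[symmetric]
    by (rule asym[OF _ u0 ud v _ c d']) (use pb ab in auto)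
qed

lemma side_minus:
  assumes x: "x < 0" and al: "(a \<longlongrightarrow> \<alpha>m) (at_left 0)" and bl: "(b \<longlongrightarrow> \<beta>m) (at_left 0)"
    and ab: "\<alpha>m < \<beta>m"
    and c: "0 < c" "c \<le> 2 / (\<beta>m - \<alpha>m)^2" and d': "0 \<le> d'" "d' \<le> - \<delta> x"
  shows "limsup (\<lambda>n. ereal (measure P {\<omega>\<in>space P. \<exists>k\<ge>n. (\<Sum>i<k. - Dplus (h (X i \<omega>)) (m + x / an n)) \<le> 0}))
           \<le> eexp (- ereal c * d'^2)"
proof -
  define y where "y n = x / an n" for n
  have yneg: "y n < 0" for n using x an_pos[of n] by (simp add: y_def divide_neg_pos)
  have yF: "filterlim y (at_left 0) sequentially"
  proof -
    have y0: "y \<longlonglongrightarrow> 0" unfolding y_def by (rule y_lim)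
    show ?thesis by (rule tendsto_imp_filterlim_at_left[OF y0]) (simp add: yneg)
  qed
  define v where "v n = - a (y n) - - b (y n)" for n
  have v: "v \<longlonglongrightarrow> \<beta>m - \<alpha>m"
  proof -
    have "(\<lambda>n. b (y n) - a (y n)) \<longlonglongrightarrow> \<beta>m - \<alpha>m"
      by (intro tendsto_diff filterlim_compose[OF bl yF] filterlim_compose[OF al yF])
    then show ?thesis by (simp add: v_def[abs_def])
  qed
  define u where "u n = - (sqrt (real n) * Dplus (popM Q h t0) (m + y n))" for n
  have ud: "(\<lambda>n. ereal (u n)) \<longlonglongrightarrow> - \<delta> x"
    using tendsto_uminus_ereal[OF \<delta>_lim[of x]] by (simp add: u_def y_def)
  have Dp: "Dplus (popM Q h t0) (m + y n) \<le> 0" for n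
  proof -
    have "Dplus (popM Q h t0) (m + y n) \<le> Dminus (popM Q h t0) m"
      by (rule Dplus_le_Dminus[OF popM_convex]) (use yneg[of n] in simp)
    also have "\<dots> \<le> 0" by (rule m_crit(1))
    finally show ?thesis .
  qed
  have u0: "0 \<le> u n" for n using Dp[of n] by (simp add: u_def mult_nonneg_nonpos)
  define p where "p n = measure P {\<omega>\<in>space P. \<exists>k\<ge>n. (\<Sum>i<k. - Dplus (h (X i \<omega>)) (m + x / an n)) \<le> 0}" for n
  have pb: "0 \<le> p n \<and> p n \<le> exp (-2 * (u n)^2 / (v n)^2)" for n
  proof
    show "0 \<le> p n" by (simp add: p_def)
    have yn: "y n \<noteq> 0" using yneg[of n] by simp
    have gAE: "AE z in Q. - b (y n) \<le> - Dplus (h z) (m + y n) \<and> - Dplus (h z) (m + y n) \<le> - a (y n)"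
      using B_Q[OF yn] by eventually_elim auto
    have ablt: "- b (y n) < - a (y n)" using B[OF yn] by simp
    have int: "(\<integral>z. - Dplus (h z) (m + y n) \<partial>Q) = - Dplus (popM Q h t0) (m + y n)"
      by (simp add: Dplus_popM)
    have gm: "(\<lambda>z. - Dplus (h z) (m + y n)) \<in> borel_measurable Q" by simp
    have "p n \<le> exp (-2 * real n * (\<integral>z. - Dplus (h z) (m + y n) \<partial>Q)^2 / (- a (y n) - - b (y n))^2)"
      unfolding p_def y_def[symmetric]
      by (rule core_max[OF P Q X_meas X_distr X_indep gm gAE ablt]) (use int Dp in simp)
    also have "\<dots> = exp (-2 * (u n)^2 / (v n)^2)"
      by (simp add: Dplus_popM u_def v_def power_mult_distrib)
    finally show "p n \<le> exp (-2 * (u n)^2 / (v n)^2)" .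
  qed
  show ?thesis
    unfolding p_def[symmetric]
    by (rule asym[OF _ u0 ud v _ c d']) (use pb ab in auto)
qed

lemma Ap_sets: "{\<omega>\<in>space P. \<exists>k\<ge>n. (\<Sum>i<k. Dplus (h (X i \<omega>)) t) \<le> 0} \<in> sets P"
proof -
  have [measurable]: "(\<lambda>\<omega>. Dplus (h (X i \<omega>)) t) \<in> borel_measurable P" for i
    using measurable_comp[OF X_meas Dh_meas] by (simp add: comp_def)
  show ?thesis by measurable
qed

lemma Am_sets: "{\<omega>\<in>space P. \<exists>k\<ge>n. (\<Sum>i<k. - Dplus (h (X i \<omega>)) t) \<le> 0} \<in> sets P"
proof -
  have [measurable]: "(\<lambda>\<omega>. Dplus (h (X i \<omega>)) t) \<in> borel_measurable P" for i
    using measurable_comp[OF X_meas Dh_meas] by (simp add: comp_def)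
  show ?thesis by measurable
qed

lemma S1_sub:
  assumes n: "n \<ge> 1" and \<omega>: "\<omega> \<in> space P"
    and S: "ereal (an n) * (SUP k\<in>{n..}. ereal (mhat k \<omega> - m)) > ereal x"
  shows "\<exists>k\<ge>n. (\<Sum>i<k. Dplus (h (X i \<omega>)) (m + x / an n)) \<le> 0"
proof -
  have "\<exists>k\<ge>n. m + x / an n < mhat k \<omega>"
  proof (rule ccontr)
    assume "\<not> ?thesis"
    then have "\<forall>k\<in>{n..}. ereal (mhat k \<omega> - m) \<le> ereal (x / an n)" by force
    then have "(SUP k\<in>{n..}. ereal (mhat k \<omega> - m)) \<le> ereal (x / an n)" by (simp add: SUP_le_iff)
    then have "ereal (an n) * (SUP k\<in>{n..}. ereal (mhat k \<omega> - m)) \<le> ereal (an n) * ereal (x / an n)"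
      by (rule ereal_mult_left_mono) (use an_pos[of n] in simp)
    also have "\<dots> = ereal x" using an_pos[of n] by simp
    finally show False using S by simp
  qed
  then obtain k where k: "k \<ge> n" "m + x / an n < mhat k \<omega>" by blast
  have "(\<Sum>i<k. Dplus (h (X i \<omega>)) (m + x / an n)) < 0"
    by (rule claimA[OF _ \<omega> k(2)]) (use n k in simp)
  with k show ?thesis by (intro exI[of _ k]) simp
qed

lemma S2_sub:
  assumes n: "n \<ge> 1" and \<omega>: "\<omega> \<in> space P"
    and S: "ereal (an n) * (INF k\<in>{n..}. ereal (mhat k \<omega> - m)) < ereal x"
  shows "\<exists>k\<ge>n. (\<Sum>i<k. - Dplus (h (X i \<omega>)) (m + x / an n)) \<le> 0"
proof -
  have "\<exists>k\<ge>n. mhat k \<omega> < m + x / an n"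
  proof (rule ccontr)
    assume "\<not> ?thesis"
    then have "\<forall>k\<in>{n..}. ereal (x / an n) \<le> ereal (mhat k \<omega> - m)" by force
    then have "ereal (x / an n) \<le> (INF k\<in>{n..}. ereal (mhat k \<omega> - m))" by (simp add: le_INF_iff)
    then have "ereal (an n) * ereal (x / an n) \<le> ereal (an n) * (INF k\<in>{n..}. ereal (mhat k \<omega> - m))"
      by (rule ereal_mult_left_mono) (use an_pos[of n] in simp)
    moreover have "ereal (an n) * ereal (x / an n) = ereal x" using an_pos[of n] by simp
    ultimately show False using S by simp
  qed
  then obtain k where k: "k \<ge> n" "mhat k \<omega> < m + x / an n" by blast
  have "0 \<le> (\<Sum>i<k. Dplus (h (X i \<omega>)) (m + x / an n))"
    by (rule claimB[OF _ \<omega> k(2)]) (use n k in simp)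
  with k show ?thesis by (intro exI[of _ k]) (simp add: sum_negf)
qed

lemma S3_sub:
  assumes n: "n \<ge> 1" and \<omega>: "\<omega> \<in> space P"
    and S: "ereal (an n) * (SUP k\<in>{n..}. ereal \<bar>mhat k \<omega> - m\<bar>) > ereal x"
  shows "(\<exists>k\<ge>n. (\<Sum>i<k. Dplus (h (X i \<omega>)) (m + x / an n)) \<le> 0) \<or>
         (\<exists>k\<ge>n. (\<Sum>i<k. - Dplus (h (X i \<omega>)) (m + (-x) / an n)) \<le> 0)"
proof -
  have "\<exists>k\<ge>n. x / an n < \<bar>mhat k \<omega> - m\<bar>"
  proof (rule ccontr)
    assume "\<not> ?thesis"
    then have "\<forall>k\<in>{n..}. ereal \<bar>mhat k \<omega> - m\<bar> \<le> ereal (x / an n)" by force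
    then have "(SUP k\<in>{n..}. ereal \<bar>mhat k \<omega> - m\<bar>) \<le> ereal (x / an n)" by (simp add: SUP_le_iff)
    then have "ereal (an n) * (SUP k\<in>{n..}. ereal \<bar>mhat k \<omega> - m\<bar>) \<le> ereal (an n) * ereal (x / an n)"
      by (rule ereal_mult_left_mono) (use an_pos[of n] in simp)
    also have "\<dots> = ereal x" using an_pos[of n] by simp
    finally show False using S by simp
  qed
  then obtain k where k: "k \<ge> n" "x / an n < \<bar>mhat k \<omega> - m\<bar>" by blast
  have k1: "1 \<le> k" using n k by simp
  show ?thesis
  proof (cases "m + x / an n < mhat k \<omega>")
    case True
    have "(\<Sum>i<k. Dplus (h (X i \<omega>)) (m + x / an n)) < 0" by (rule claimA[OF k1 \<omega> True])
    with k show ?thesis by auto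
  next
    case False
    with k have "mhat k \<omega> < m + (-x) / an n" by (auto simp: abs_if split: if_splits)
    then have "0 \<le> (\<Sum>i<k. Dplus (h (X i \<omega>)) (m + (-x) / an n))" by (rule claimB[OF k1 \<omega>])
    with k show ?thesis by (auto simp: sum_negf)
  qed
qed

end




lemma ereal_uminus_sq: "(- (z::ereal))^2 = z^2"
  by (cases z) (auto simp: power2_eq_square)

lemma ereal_twice: "(z::ereal) + z = 2 * z"
  by (cases z) auto

context setting begin

interpretation Qp: prob_space Q by (rule Q)
interpretation Pp: prob_space P by (rule P)

lemma result1:
  assumes al: "(a \<longlongrightarrow> \<alpha>p) (at_right 0)" and bl: "(b \<longlongrightarrow> \<beta>p) (at_right 0)" and ab: "\<beta>p > \<alpha>p"
    and x: "0 < x" and c: "0 < c" "c \<le> 2 / (\<beta>p - \<alpha>p)^2" and d': "0 \<le> d'" "d' \<le> \<delta> x"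
  shows "limsup (\<lambda>n. ereal (measure P {\<omega> \<in> space P.
                   ereal (an n) * (SUP k\<in>{n..}. ereal (mhat k \<omega> - m)) > ereal x}))
              \<le> eexp (- ereal c * d'^2)"
proof -
  have "limsup (\<lambda>n. ereal (measure P {\<omega> \<in> space P.
                   ereal (an n) * (SUP k\<in>{n..}. ereal (mhat k \<omega> - m)) > ereal x}))
       \<le> limsup (\<lambda>n. ereal (measure P {\<omega>\<in>space P. \<exists>k\<ge>n. (\<Sum>i<k. Dplus (h (X i \<omega>)) (m + x / an n)) \<le> 0}))"
  proof (rule Limsup_mono, unfold eventually_sequentially, intro exI allI impI)
    fix n :: nat assume n: "1 \<le> n"
    show "ereal (measure P {\<omega> \<in> space P. ereal (an n) * (SUP k\<in>{n..}. ereal (mhat k \<omega> - m)) > ereal x})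
       \<le> ereal (measure P {\<omega>\<in>space P. \<exists>k\<ge>n. (\<Sum>i<k. Dplus (h (X i \<omega>)) (m + x / an n)) \<le> 0})"
      by (intro ereal_less_eq(3)[THEN iffD2] Pp.finite_measure_mono Ap_sets) (use S1_sub[OF n] in auto)
  qed
  also have "\<dots> \<le> eexp (- ereal c * d'^2)"
    by (rule side_plus[OF x al bl ab c d'])
  finally show ?thesis .
qed

lemma result2:
  assumes al: "(a \<longlongrightarrow> \<alpha>m) (at_left 0)" and bl: "(b \<longlongrightarrow> \<beta>m) (at_left 0)" and ab: "\<beta>m > \<alpha>m"
    and x: "x < 0" and c: "0 < c" "c \<le> 2 / (\<beta>m - \<alpha>m)^2" and d': "0 \<le> d'" "d' \<le> - \<delta> x"
  shows "limsup (\<lambda>n. ereal (measure P {\<omega> \<in> space P.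
                   ereal (an n) * (INF k\<in>{n..}. ereal (mhat k \<omega> - m)) < ereal x}))
              \<le> eexp (- ereal c * d'^2)"
proof -
  have "limsup (\<lambda>n. ereal (measure P {\<omega> \<in> space P.
                   ereal (an n) * (INF k\<in>{n..}. ereal (mhat k \<omega> - m)) < ereal x}))
       \<le> limsup (\<lambda>n. ereal (measure P {\<omega>\<in>space P. \<exists>k\<ge>n. (\<Sum>i<k. - Dplus (h (X i \<omega>)) (m + x / an n)) \<le> 0}))"
  proof (rule Limsup_mono, unfold eventually_sequentially, intro exI allI impI)
    fix n :: nat assume n: "1 \<le> n"
    show "ereal (measure P {\<omega> \<in> space P. ereal (an n) * (INF k\<in>{n..}. ereal (mhat k \<omega> - m)) < ereal x})
       \<le> ereal (measure P {\<omega>\<in>space P. \<exists>k\<ge>n. (\<Sum>i<k. - Dplus (h (X i \<omega>)) (m + x / an n)) \<le> 0})"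
      by (intro ereal_less_eq(3)[THEN iffD2] Pp.finite_measure_mono Am_sets) (use S2_sub[OF n] in auto)
  qed
  also have "\<dots> \<le> eexp (- ereal c * d'^2)"
    by (rule side_minus[OF x al bl ab c d'])
  finally show ?thesis .
qed

lemma result3:
  assumes alp: "(a \<longlongrightarrow> \<alpha>p) (at_right 0)" and blp: "(b \<longlongrightarrow> \<beta>p) (at_right 0)" and abp: "\<beta>p > \<alpha>p"
    and alm: "(a \<longlongrightarrow> \<alpha>m) (at_left 0)" and blm: "(b \<longlongrightarrow> \<beta>m) (at_left 0)" and abm: "\<beta>m > \<alpha>m"
    and x: "0 < x"
  shows "limsup (\<lambda>n. ereal (measure P {\<omega> \<in> space P.
                   ereal (an n) * (SUP k\<in>{n..}. ereal \<bar>mhat k \<omega> - m\<bar>) > ereal x}))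
              \<le> 2 * eexp (- ereal (2 / (max (\<beta>p - \<alpha>p) (\<beta>m - \<alpha>m))^2) * (min (\<delta> x) (- \<delta> (-x)))^2)"
proof -
  define \<tau> where "\<tau> = max (\<beta>p - \<alpha>p) (\<beta>m - \<alpha>m)"
  define c where "c = 2 / \<tau>^2"
  define D where "D = min (\<delta> x) (- \<delta> (-x))"
  define E where "E = eexp (- ereal c * D^2)"
  define Ap where "Ap n = {\<omega>\<in>space P. \<exists>k\<ge>n. (\<Sum>i<k. Dplus (h (X i \<omega>)) (m + x / an n)) \<le> 0}" for n
  define Am where "Am n = {\<omega>\<in>space P. \<exists>k\<ge>n. (\<Sum>i<k. - Dplus (h (X i \<omega>)) (m + (-x) / an n)) \<le> 0}" for n
  have \<tau>p: "0 < \<beta>p - \<alpha>p" "\<beta>p - \<alpha>p \<le> \<tau>" using abp by (auto simp: \<tau>_def)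
  have \<tau>m: "0 < \<beta>m - \<alpha>m" "\<beta>m - \<alpha>m \<le> \<tau>" using abm by (auto simp: \<tau>_def)
  have c0: "0 < c" using \<tau>p by (simp add: c_def)
  have cp: "c \<le> 2 / (\<beta>p - \<alpha>p)^2"
  proof -
    have "(\<beta>p - \<alpha>p)^2 \<le> \<tau>^2" by (rule power_mono) (use \<tau>p in auto)
    moreover have "0 < \<tau>^2 * (\<beta>p - \<alpha>p)^2" using \<tau>p by simp
    ultimately show ?thesis unfolding c_def by (intro frac_le) auto
  qed
  have cm: "c \<le> 2 / (\<beta>m - \<alpha>m)^2"
  proof -
    have "(\<beta>m - \<alpha>m)^2 \<le> \<tau>^2" by (rule power_mono) (use \<tau>m in auto)
    moreover have "0 < \<tau>^2 * (\<beta>m - \<alpha>m)^2" using \<tau>m by simp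
    ultimately show ?thesis unfolding c_def by (intro frac_le) auto
  qed
  have D0: "0 \<le> D" using delta_nonneg[OF x] delta_nonpos[of "-x"] x by (simp add: D_def)
  have Dle: "D \<le> \<delta> x" "D \<le> - \<delta> (-x)" by (simp_all add: D_def)
  have "limsup (\<lambda>n. ereal (measure P {\<omega> \<in> space P.
                   ereal (an n) * (SUP k\<in>{n..}. ereal \<bar>mhat k \<omega> - m\<bar>) > ereal x}))
       \<le> limsup (\<lambda>n. ereal (measure P (Ap n)) + ereal (measure P (Am n)))"
  proof (rule Limsup_mono, unfold eventually_sequentially, intro exI allI impI)
    fix n :: nat assume n: "1 \<le> n"
    have "measure P {\<omega> \<in> space P. ereal (an n) * (SUP k\<in>{n..}. ereal \<bar>mhat k \<omega> - m\<bar>) > ereal x}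
          \<le> measure P (Ap n \<union> Am n)"
    proof -
      have sub: "{\<omega> \<in> space P. ereal (an n) * (SUP k\<in>{n..}. ereal \<bar>mhat k \<omega> - m\<bar>) > ereal x} \<subseteq> Ap n \<union> Am n"
        using S3_sub[OF n] by (auto simp: Ap_def Am_def)
      have sets: "Ap n \<union> Am n \<in> sets P" unfolding Ap_def Am_def
        by (rule sets.Un) (rule Ap_sets, rule Am_sets)
      show ?thesis by (rule Pp.finite_measure_mono[OF sub sets])
    qed
    also have "\<dots> \<le> measure P (Ap n) + measure P (Am n)"
      unfolding Ap_def Am_def by (rule measure_subadditive) (rule Ap_sets, rule Am_sets, simp_all add: Pp.emeasure_eq_measure)
    finally show "ereal (measure P {\<omega> \<in> space P. ereal (an n) * (SUP k\<in>{n..}. ereal \<bar>mhat k \<omega> - m\<bar>) > ereal x})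
       \<le> ereal (measure P (Ap n)) + ereal (measure P (Am n))" by simp
  qed
  also have "\<dots> \<le> limsup (\<lambda>n. ereal (measure P (Ap n))) + limsup (\<lambda>n. ereal (measure P (Am n)))"
    by (rule ereal_limsup_add_mono)
  also have "\<dots> \<le> E + E"
  proof (rule add_mono)
    show "limsup (\<lambda>n. ereal (measure P (Ap n))) \<le> E"
      unfolding Ap_def E_def by (rule side_plus[OF x alp blp abp c0 cp D0 Dle(1)])
    show "limsup (\<lambda>n. ereal (measure P (Am n))) \<le> E"
      unfolding Am_def E_def by (rule side_minus[OF _ alm blm abm c0 cm D0 Dle(2)]) (use x in simp)
  qed
  also have "\<dots> = 2 * E" by (rule ereal_twice)
  finally show ?thesis by (simp add: E_def c_def D_def \<tau>_def)
qed

lemma main_result: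
  shows
    "(\<forall>\<alpha>p \<beta>p. (a \<longlongrightarrow> \<alpha>p) (at_right 0) \<and> (b \<longlongrightarrow> \<beta>p) (at_right 0) \<and> \<beta>p > \<alpha>p \<longrightarrow>
        (\<forall>x>0. limsup (\<lambda>n. ereal (measure P {\<omega> \<in> space P.
                   ereal (an n) * (SUP k\<in>{n..}. ereal (mhat k \<omega> - m)) > ereal x}))
              \<le> eexp (- ereal (2 / (\<beta>p - \<alpha>p)^2) * (\<delta> x)^2)))
   \<and> (\<forall>\<alpha>m \<beta>m. (a \<longlongrightarrow> \<alpha>m) (at_left 0) \<and> (b \<longlongrightarrow> \<beta>m) (at_left 0) \<and> \<beta>m > \<alpha>m \<longrightarrow>
        (\<forall>x<0. limsup (\<lambda>n. ereal (measure P {\<omega> \<in> space P.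
                   ereal (an n) * (INF k\<in>{n..}. ereal (mhat k \<omega> - m)) < ereal x}))
              \<le> eexp (- ereal (2 / (\<beta>m - \<alpha>m)^2) * (\<delta> x)^2)))
   \<and> (\<forall>\<alpha>p \<beta>p \<alpha>m \<beta>m. (a \<longlongrightarrow> \<alpha>p) (at_right 0) \<and> (b \<longlongrightarrow> \<beta>p) (at_right 0) \<and> \<beta>p > \<alpha>p
        \<and> (a \<longlongrightarrow> \<alpha>m) (at_left 0) \<and> (b \<longlongrightarrow> \<beta>m) (at_left 0) \<and> \<beta>m > \<alpha>m \<longrightarrow>
        (let \<tau> = max (\<beta>p - \<alpha>p) (\<beta>m - \<alpha>m) in
         \<forall>x>0. limsup (\<lambda>n. ereal (measure P {\<omega> \<in> space P.
                   ereal (an n) * (SUP k\<in>{n..}. ereal \<bar>mhat k \<omega> - m\<bar>) > ereal x}))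
              \<le> 2 * eexp (- ereal (2 / \<tau>^2) * (min (\<delta> x) (- \<delta> (-x)))^2)))"
proof (intro conjI allI impI)
  fix \<alpha>p \<beta>p x :: real
  assume H: "(a \<longlongrightarrow> \<alpha>p) (at_right 0) \<and> (b \<longlongrightarrow> \<beta>p) (at_right 0) \<and> \<beta>p > \<alpha>p" and x: "0 < x"
  then have ab: "0 < \<beta>p - \<alpha>p" by simp
  show "limsup (\<lambda>n. ereal (measure P {\<omega> \<in> space P.
                   ereal (an n) * (SUP k\<in>{n..}. ereal (mhat k \<omega> - m)) > ereal x}))
              \<le> eexp (- ereal (2 / (\<beta>p - \<alpha>p)^2) * (\<delta> x)^2)"
    using H by (intro result1[OF _ _ _ x]) (use ab delta_nonneg[OF x] in auto)
next
  fix \<alpha>m \<beta>m x :: real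
  assume H: "(a \<longlongrightarrow> \<alpha>m) (at_left 0) \<and> (b \<longlongrightarrow> \<beta>m) (at_left 0) \<and> \<beta>m > \<alpha>m" and x: "x < 0"
  then have ab: "0 < \<beta>m - \<alpha>m" by simp
  have "limsup (\<lambda>n. ereal (measure P {\<omega> \<in> space P.
                   ereal (an n) * (INF k\<in>{n..}. ereal (mhat k \<omega> - m)) < ereal x}))
              \<le> eexp (- ereal (2 / (\<beta>m - \<alpha>m)^2) * (- \<delta> x)^2)"
    using H by (intro result2[OF _ _ _ x]) (use ab delta_nonpos[OF x] in auto)
  then show "limsup (\<lambda>n. ereal (measure P {\<omega> \<in> space P.
                   ereal (an n) * (INF k\<in>{n..}. ereal (mhat k \<omega> - m)) < ereal x}))
              \<le> eexp (- ereal (2 / (\<beta>m - \<alpha>m)^2) * (\<delta> x)^2)"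
    by (simp only: ereal_uminus_sq)
next
  fix \<alpha>p \<beta>p \<alpha>m \<beta>m :: real
  assume H: "(a \<longlongrightarrow> \<alpha>p) (at_right 0) \<and> (b \<longlongrightarrow> \<beta>p) (at_right 0) \<and> \<beta>p > \<alpha>p
        \<and> (a \<longlongrightarrow> \<alpha>m) (at_left 0) \<and> (b \<longlongrightarrow> \<beta>m) (at_left 0) \<and> \<beta>m > \<alpha>m"
  show "let \<tau> = max (\<beta>p - \<alpha>p) (\<beta>m - \<alpha>m) in
         \<forall>x>0. limsup (\<lambda>n. ereal (measure P {\<omega> \<in> space P.
                   ereal (an n) * (SUP k\<in>{n..}. ereal \<bar>mhat k \<omega> - m\<bar>) > ereal x}))
              \<le> 2 * eexp (- ereal (2 / \<tau>^2) * (min (\<delta> x) (- \<delta> (-x)))^2)"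
    unfolding Let_def using H by (intro allI impI result3) auto
qed

end



theorem corollary4:
  fixes Q :: "'s measure" and P :: "'w measure"
    and h :: "'s \<Rightarrow> real \<Rightarrow> real" and t0 m :: real
    and X :: "nat \<Rightarrow> 'w \<Rightarrow> 's" and mhat :: "nat \<Rightarrow> 'w \<Rightarrow> real"
    and a b :: "real \<Rightarrow> real" and an :: "nat \<Rightarrow> real" and \<delta> :: "real \<Rightarrow> ereal"
  assumes Q: "prob_space Q"
    and h_meas: "\<And>t. (\<lambda>x. h x t) \<in> borel_measurable Q"
    and h_convex: "\<And>x. x \<in> space Q \<Longrightarrow> convex_on UNIV (h x)"
    and int_Dplus: "\<And>t. integrable Q (\<lambda>x. Dplus (h x) t)"
    and int_Dminus: "\<And>t. integrable Q (\<lambda>x. Dminus (h x) t)"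
    and P: "prob_space P"
    and X_meas: "\<And>i. X i \<in> measurable P Q"
    and X_distr: "\<And>i. distr P Q (X i) = Q"
    and X_indep: "prob_space.indep_vars P (\<lambda>_. Q) X UNIV"
    and mhat_meas: "\<And>n. n \<ge> 1 \<Longrightarrow> mhat n \<in> borel_measurable P"
    and mhat_min: "\<And>n \<omega> t. n \<ge> 1 \<Longrightarrow> \<omega> \<in> space P \<Longrightarrow>
                      empM h t0 X n \<omega> (mhat n \<omega>) \<le> empM h t0 X n \<omega> t"
    and mhat_smallest: "\<And>n \<omega> t. n \<ge> 1 \<Longrightarrow> \<omega> \<in> space P \<Longrightarrow>
                      empM h t0 X n \<omega> t \<le> empM h t0 X n \<omega> (mhat n \<omega>) \<Longrightarrow> mhat n \<omega> \<le> t"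
    and m_crit: "Dminus (popM Q h t0) m \<le> 0" "0 \<le> Dplus (popM Q h t0) m"
    and B: "\<And>x. x \<noteq> 0 \<Longrightarrow> a x < b x \<and>
              (AE \<omega> in P. a x \<le> Dplus (h (X 0 \<omega>)) (m + x) \<and> Dplus (h (X 0 \<omega>)) (m + x) \<le> b x)"
    and an_pos: "\<And>n. an n > 0"
    and an_lim: "filterlim an at_top sequentially"
    and \<delta>_lim: "\<And>x. ((\<lambda>n. ereal (sqrt (real n) * Dplus (popM Q h t0) (m + x / an n))) \<longlongrightarrow> \<delta> x) sequentially"
  shows
    "(\<forall>\<alpha>p \<beta>p. (a \<longlongrightarrow> \<alpha>p) (at_right 0) \<and> (b \<longlongrightarrow> \<beta>p) (at_right 0) \<and> \<beta>p > \<alpha>p \<longrightarrow>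
        (\<forall>x>0. limsup (\<lambda>n. ereal (measure P {\<omega> \<in> space P.
                   ereal (an n) * (SUP k\<in>{n..}. ereal (mhat k \<omega> - m)) > ereal x}))
              \<le> eexp (- ereal (2 / (\<beta>p - \<alpha>p)^2) * (\<delta> x)^2)))
   \<and> (\<forall>\<alpha>m \<beta>m. (a \<longlongrightarrow> \<alpha>m) (at_left 0) \<and> (b \<longlongrightarrow> \<beta>m) (at_left 0) \<and> \<beta>m > \<alpha>m \<longrightarrow>
        (\<forall>x<0. limsup (\<lambda>n. ereal (measure P {\<omega> \<in> space P.
                   ereal (an n) * (INF k\<in>{n..}. ereal (mhat k \<omega> - m)) < ereal x}))
              \<le> eexp (- ereal (2 / (\<beta>m - \<alpha>m)^2) * (\<delta> x)^2)))
   \<and> (\<forall>\<alpha>p \<beta>p \<alpha>m \<beta>m. (a \<longlongrightarrow> \<alpha>p) (at_right 0) \<and> (b \<longlongrightarrow> \<beta>p) (at_right 0) \<and> \<beta>p > \<alpha>p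
        \<and> (a \<longlongrightarrow> \<alpha>m) (at_left 0) \<and> (b \<longlongrightarrow> \<beta>m) (at_left 0) \<and> \<beta>m > \<alpha>m \<longrightarrow>
        (let \<tau> = max (\<beta>p - \<alpha>p) (\<beta>m - \<alpha>m) in
         \<forall>x>0. limsup (\<lambda>n. ereal (measure P {\<omega> \<in> space P.
                   ereal (an n) * (SUP k\<in>{n..}. ereal \<bar>mhat k \<omega> - m\<bar>) > ereal x}))
              \<le> 2 * eexp (- ereal (2 / \<tau>^2) * (min (\<delta> x) (- \<delta> (-x)))^2)))"
  proof -
  have S: "setting Q P h t0 m X mhat a b an \<delta>"
    by (rule setting.intro) (fact assms)+
  show ?thesis by (rule setting.main_result[OF S])
qed

end
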